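(* Let $\mathcal{C}$ be a class of finite digraphs for which there is a natural number $N$ such that every disjoint edge set in every member of $\mathcal{C}$ has size at most $N$. Then $\mathcal{C}$ is well quasi-ordered under both the standard and the strong homomorphic image orderings.
   Context: A digraph is a set $D$ with a binary relation $E(D)\subseteq D\times D$ (edges; loops allowed). Edges $(a_1,b_1),\dots,(a_k,b_k)$ form a disjoint edge set if the vertices $a_1,\dots,a_k,b_1,\dots,b_k$ are all distinct. A homomorphism $\phi:D_1\to D_2$ maps edges to edges; it is strong if additionally every edge of $D_2$ between vertices of $\phi(D_1)$ is the image of an edge of $D_1$. Epimorphism = surjective homomorphism. Standard homomorphic image ordering: $A\preceq B$ iff there is an epimorphism $B\to A$; strong homomorphic image ordering: $A\preceq B$ iff there is a strong epimorphism $B\to A$. Well quasi-ordered means no infinite strictly decreasing sequence and no infinite antichain; structures considered up to isomorphism. *)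

theory Defs
  imports Main
begin

text \<open>Vertices are taken from nat; every finite digraph is isomorphic
to one on nat, so classes of finite digraphs (up to isomorphism) are sets of such pairs.\<close>

type_synonym digraph = "nat set \<times> (nat \<times> nat) set"

definition verts :: "digraph \<Rightarrow> nat set" where "verts D = fst D"
definition edges :: "digraph \<Rightarrow> (nat \<times> nat) set" where "edges D = snd D"

definition finite_digraph :: "digraph \<Rightarrow> bool" where
  "finite_digraph D \<longleftrightarrow> finite (verts D) \<and> edges D \<subseteq> verts D \<times> verts D"

definition disjoint_edge_set :: "digraph \<Rightarrow> (nat \<times> nat) list \<Rightarrow> bool" where
  "disjoint_edge_set D es \<longleftrightarrow> set es \<subseteq> edges D \<and> distinct (map fst es @ map snd es)"

definition hom :: "(nat \<Rightarrow> nat) \<Rightarrow> digraph \<Rightarrow> digraph \<Rightarrow> bool" where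
  "hom \<phi> D1 D2 \<longleftrightarrow> \<phi> ` verts D1 \<subseteq> verts D2 \<and>
     (\<forall>a b. (a, b) \<in> edges D1 \<longrightarrow> (\<phi> a, \<phi> b) \<in> edges D2)"

definition strong_hom :: "(nat \<Rightarrow> nat) \<Rightarrow> digraph \<Rightarrow> digraph \<Rightarrow> bool" where
  "strong_hom \<phi> D1 D2 \<longleftrightarrow> hom \<phi> D1 D2 \<and>
     (\<forall>x \<in> \<phi> ` verts D1. \<forall>y \<in> \<phi> ` verts D1. (x, y) \<in> edges D2 \<longrightarrow>
        (\<exists>a b. (a, b) \<in> edges D1 \<and> \<phi> a = x \<and> \<phi> b = y))"

definition epi :: "(nat \<Rightarrow> nat) \<Rightarrow> digraph \<Rightarrow> digraph \<Rightarrow> bool" where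
  "epi \<phi> D1 D2 \<longleftrightarrow> hom \<phi> D1 D2 \<and> \<phi> ` verts D1 = verts D2"

definition strong_epi :: "(nat \<Rightarrow> nat) \<Rightarrow> digraph \<Rightarrow> digraph \<Rightarrow> bool" where
  "strong_epi \<phi> D1 D2 \<longleftrightarrow> strong_hom \<phi> D1 D2 \<and> \<phi> ` verts D1 = verts D2"

definition hom_image_le :: "digraph \<Rightarrow> digraph \<Rightarrow> bool" where
  "hom_image_le A B \<longleftrightarrow> (\<exists>\<phi>. epi \<phi> B A)"

definition strong_hom_image_le :: "digraph \<Rightarrow> digraph \<Rightarrow> bool" where
  "strong_hom_image_le A B \<longleftrightarrow> (\<exists>\<phi>. strong_epi \<phi> B A)"

definition wqo_on :: "'x set \<Rightarrow> ('x \<Rightarrow> 'x \<Rightarrow> bool) \<Rightarrow> bool" where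
  "wqo_on A le \<longleftrightarrow>
     \<not> (\<exists>f :: nat \<Rightarrow> 'x. (\<forall>n. f n \<in> A) \<and> (\<forall>n. le (f (Suc n)) (f n) \<and> \<not> le (f n) (f (Suc n)))) \<and>
     \<not> (\<exists>f :: nat \<Rightarrow> 'x. (\<forall>n. f n \<in> A) \<and> (\<forall>i j. i \<noteq> j \<longrightarrow> \<not> le (f i) (f j)))"

end

theory Submission imports Defs "HOL-Library.Ramsey" "HOL-Library.Infinite_Set" begin

definition good :: "nat \<Rightarrow> digraph \<Rightarrow> bool" where
  "good N D \<longleftrightarrow> finite_digraph D \<and> (\<forall>es. disjoint_edge_set D es \<longrightarrow> length es \<le> N)"

definition mx :: "digraph \<Rightarrow> (nat\<times>nat) list" where
  "mx D = (SOME es. disjoint_edge_set D es \<and> (\<forall>es'. disjoint_edge_set D es' \<longrightarrow> length es' \<le> length es))"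

definition Ks :: "digraph \<Rightarrow> nat set" where
  "Ks D = set (map fst (mx D) @ map snd (mx D))"

definition Ls :: "digraph \<Rightarrow> nat list" where
  "Ls D = sorted_list_of_set (Ks D)"

definition tp :: "digraph \<Rightarrow> nat \<Rightarrow> nat set \<times> nat set \<times> bool" where
  "tp D v = ({i. i < length (Ls D) \<and> (v, Ls D ! i) \<in> edges D},
             {i. i < length (Ls D) \<and> (Ls D ! i, v) \<in> edges D}, (v, v) \<in> edges D)"

definition cnt :: "digraph \<Rightarrow> nat set \<times> nat set \<times> bool \<Rightarrow> nat" where
  "cnt D t = card {v \<in> verts D - Ks D. tp D v = t}"

definition key :: "digraph \<Rightarrow> nat \<times> (nat \<times> nat) set \<times> (nat set \<times> nat set \<times> bool) set" where
  "key D = (length (Ls D), {(i,j). i < length (Ls D) \<and> j < length (Ls D) \<and> (Ls D ! i, Ls D ! j) \<in> edges D},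
            {t. cnt D t > 0})"

lemma mx_spec:
  assumes "good N D"
  shows "disjoint_edge_set D (mx D) \<and> (\<forall>es'. disjoint_edge_set D es' \<longrightarrow> length es' \<le> length (mx D))"
proof -
  let ?S = "{length es | es. disjoint_edge_set D es}"
  have sub: "?S \<subseteq> {..N}" using assms unfolding good_def by auto
  have fin: "finite ?S" using sub finite_subset by blast
  have "disjoint_edge_set D []" by (simp add: disjoint_edge_set_def)
  hence "length ([]::(nat\<times>nat) list) \<in> ?S" by blast
  hence ne: "?S \<noteq> {}" by blast
  have "Max ?S \<in> ?S" using Max_in[OF fin ne] .
  hence "\<exists>es. Max ?S = length es \<and> disjoint_edge_set D es" by (simp only: mem_Collect_eq)
  then obtain es where es: "disjoint_edge_set D es" "Max ?S = length es" by blast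
  have "\<forall>es'. disjoint_edge_set D es' \<longrightarrow> length es' \<le> length es"
  proof (intro allI impI)
    fix es' assume "disjoint_edge_set D es'"
    hence "length es' \<in> ?S" by blast
    hence "length es' \<le> Max ?S" by (rule Max_ge[OF fin])
    thus "length es' \<le> length es" using es(2) by simp
  qed
  with es(1) have "\<exists>es. disjoint_edge_set D es \<and> (\<forall>es'. disjoint_edge_set D es' \<longrightarrow> length es' \<le> length es)"
    by blast
  thus ?thesis unfolding mx_def by (rule someI_ex)
qed

lemma fin_Ks: "finite (Ks D)" unfolding Ks_def by simp

lemma set_Ls: "set (Ls D) = Ks D" and dist_Ls: "distinct (Ls D)"
  unfolding Ls_def using fin_Ks by auto

lemma Ks_sub: assumes "good N D" shows "Ks D \<subseteq> verts D"
proof -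
  have "set (mx D) \<subseteq> edges D" using mx_spec[OF assms] by (simp add: disjoint_edge_set_def)
  moreover have "edges D \<subseteq> verts D \<times> verts D" using assms by (simp add: good_def finite_digraph_def)
  ultimately have "fst ` set (mx D) \<subseteq> verts D" "snd ` set (mx D) \<subseteq> verts D" by auto
  thus ?thesis unfolding Ks_def by simp
qed

lemma len_Ls: assumes "good N D" shows "length (Ls D) \<le> 2 * N"
proof -
  have "length (Ls D) = card (Ks D)" using distinct_card[OF dist_Ls, of D] set_Ls[of D] by simp
  also have "\<dots> \<le> length (map fst (mx D) @ map snd (mx D))" unfolding Ks_def by (rule card_length)
  also have "\<dots> \<le> 2 * N" proof -
    have "length (mx D) \<le> N" using mx_spec[OF assms] assms by (simp add: good_def)
    thus ?thesis by simp
  qed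
  finally show ?thesis .
qed

lemma cover:
  assumes "good N D" "(a,b) \<in> edges D" "a \<noteq> b"
  shows "a \<in> Ks D \<or> b \<in> Ks D"
proof (rule ccontr)
  assume n: "\<not> (a \<in> Ks D \<or> b \<in> Ks D)"
  have m: "disjoint_edge_set D (mx D)" "\<forall>es'. disjoint_edge_set D es' \<longrightarrow> length es' \<le> length (mx D)"
    using mx_spec[OF assms(1)] by auto
  have "disjoint_edge_set D (mx D @ [(a,b)])"
    using m(1) n assms(2,3) unfolding disjoint_edge_set_def Ks_def by simp
  hence "length (mx D @ [(a,b)]) \<le> length (mx D)" using m(2) by blast
  thus False by simp
qed

lemma tp_out: "j < length (Ls D) \<Longrightarrow> (v, Ls D ! j) \<in> edges D \<longleftrightarrow> j \<in> fst (tp D v)"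
  by (simp add: tp_def)
lemma tp_in: "j < length (Ls D) \<Longrightarrow> (Ls D ! j, v) \<in> edges D \<longleftrightarrow> j \<in> fst (snd (tp D v))"
  by (simp add: tp_def)
lemma tp_loop: "(v, v) \<in> edges D \<longleftrightarrow> snd (snd (tp D v))"
  by (simp add: tp_def)

lemma surj_exists:
  assumes "finite A" "finite B" "card B \<le> card A" "A \<noteq> {} \<Longrightarrow> B \<noteq> {}"
  shows "\<exists>g. g ` A = B"
proof (cases "B = {}")
  case True
  then show ?thesis using assms(4) by auto
next
  case False
  obtain h where h: "h ` B \<subseteq> A" "inj_on h B" using card_le_inj[OF assms(2,1,3)] by blast
  obtain b0 where b0: "b0 \<in> B" using False by auto
  define g where "g x = (if x \<in> h ` B then inv_into B h x else b0)" for x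
  have "g ` A = B"
  proof
    show "g ` A \<subseteq> B" using b0 unfolding g_def by (auto intro: inv_into_into)
    show "B \<subseteq> g ` A"
    proof
      fix b assume "b \<in> B"
      hence "g (h b) = b" unfolding g_def using h(2) by auto
      thus "b \<in> g ` A" using h(1) \<open>b \<in> B\<close> by (metis image_eqI image_subset_iff)
    qed
  qed
  thus ?thesis by blast
qed

lemma embed:
  assumes g1: "good N D1" and g2: "good N D2" and kk: "key D1 = key D2"
    and c: "\<forall>t. cnt D1 t \<le> cnt D2 t"
  shows "strong_hom_image_le D1 D2"
proof -
  define L1 where "L1 = Ls D1"
  define L2 where "L2 = Ls D2"
  define k where "k = length L2"
  have len: "length L1 = k" using kk unfolding key_def L1_def L2_def k_def by simp
  have Eiff: "(L1!i, L1!j) \<in> edges D1 \<longleftrightarrow> (L2!i, L2!j) \<in> edges D2" if "i < k" "j < k" for i j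
  proof -
    have "fst (snd (key D1)) = fst (snd (key D2))" using kk by simp
    hence "(i,j) \<in> fst (snd (key D1)) \<longleftrightarrow> (i,j) \<in> fst (snd (key D2))" by simp
    thus ?thesis using that len unfolding key_def L1_def L2_def k_def by simp
  qed
  have supp: "cnt D1 t > 0 \<longleftrightarrow> cnt D2 t > 0" for t
  proof -
    have "snd (snd (key D1)) = snd (snd (key D2))" using kk by simp
    hence "t \<in> snd (snd (key D1)) \<longleftrightarrow> t \<in> snd (snd (key D2))" by simp
    thus ?thesis unfolding key_def by simp
  qed
  have fV1: "finite (verts D1)" and fV2: "finite (verts D2)"
    using g1 g2 by (auto simp: good_def finite_digraph_def)
  have EV1: "edges D1 \<subseteq> verts D1 \<times> verts D1" and EV2: "edges D2 \<subseteq> verts D2 \<times> verts D2"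
    using g1 g2 by (auto simp: good_def finite_digraph_def)
  define R1 where "R1 t = {v \<in> verts D1 - Ks D1. tp D1 v = t}" for t
  define R2 where "R2 t = {v \<in> verts D2 - Ks D2. tp D2 v = t}" for t
  have "\<forall>t. \<exists>g. g ` R2 t = R1 t"
  proof
    fix t
    have f1: "finite (R1 t)" and f2: "finite (R2 t)" using fV1 fV2 unfolding R1_def R2_def by auto
    show "\<exists>g. g ` R2 t = R1 t"
    proof (rule surj_exists[OF f2 f1])
      show "card (R1 t) \<le> card (R2 t)" using spec[OF c, of t] unfolding cnt_def R1_def R2_def by simp
      assume "R2 t \<noteq> {}"
      hence "cnt D2 t > 0" using f2 unfolding cnt_def R2_def by (simp add: card_gt_0_iff)
      hence "cnt D1 t > 0" using supp by simp
      thus "R1 t \<noteq> {}" unfolding cnt_def R1_def by (metis card.empty less_irrefl)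
    qed
  qed
  then obtain G where G: "\<And>t. G t ` R2 t = R1 t" by metis
  have d2: "distinct L2" and s2: "set L2 = Ks D2" unfolding L2_def using dist_Ls set_Ls by auto
  have s1: "set L1 = Ks D1" unfolding L1_def using set_Ls by auto
  define ix where "ix v = (THE i. i < k \<and> L2!i = v)" for v
  have ix: "ix (L2!i) = i" if "i < k" for i
    unfolding ix_def
    by (rule the_equality) (use that d2 k_def nth_eq_iff_index_eq in auto)
  define \<phi> where "\<phi> v = (if v \<in> Ks D2 then L1 ! ix v else G (tp D2 v) v)" for v
  have phiK: "\<phi> (L2!i) = L1!i" if "i < k" for i
    using that ix s2 k_def unfolding \<phi>_def by (metis nth_mem)
  have phiR: "\<phi> v \<in> verts D1 \<and> \<phi> v \<notin> Ks D1 \<and> tp D1 (\<phi> v) = tp D2 v"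
    if "v \<in> verts D2" "v \<notin> Ks D2" for v
  proof -
    have "v \<in> R2 (tp D2 v)" using that unfolding R2_def by auto
    hence "G (tp D2 v) v \<in> R1 (tp D2 v)" using G by blast
    thus ?thesis using that unfolding \<phi>_def R1_def by auto
  qed
  have pre: "\<exists>a \<in> verts D2. a \<notin> Ks D2 \<and> \<phi> a = x \<and> tp D2 a = tp D1 x"
    if "x \<in> verts D1" "x \<notin> Ks D1" for x
  proof -
    have "x \<in> R1 (tp D1 x)" using that unfolding R1_def by auto
    then obtain a where a: "a \<in> R2 (tp D1 x)" "G (tp D1 x) a = x" using G by (metis imageE)
    thus ?thesis unfolding \<phi>_def R2_def by auto
  qed
  have K1n: "\<exists>i<k. x = L1!i" if "x \<in> Ks D1" for x
    using that s1 len by (metis in_set_conv_nth)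
  have K2n: "\<exists>i<k. x = L2!i" if "x \<in> Ks D2" for x
    using that s2 k_def by (metis in_set_conv_nth)
  have lk1: "length (Ls D1) = k" and lk2: "length (Ls D2) = k" using len L1_def L2_def k_def by auto
  have img: "\<phi> ` verts D2 = verts D1"
  proof
    show "\<phi> ` verts D2 \<subseteq> verts D1"
    proof
      fix y assume "y \<in> \<phi> ` verts D2"
      then obtain v where v: "v \<in> verts D2" "y = \<phi> v" by auto
      show "y \<in> verts D1"
      proof (cases "v \<in> Ks D2")
        case True
        then obtain i where "i < k" "v = L2!i" using K2n by blast
        hence "y = L1!i" using phiK v by simp
        thus ?thesis using \<open>i<k\<close> len s1 Ks_sub[OF g1] by (metis nth_mem subsetD)
      qed (use phiR v in auto)
    qed
    show "verts D1 \<subseteq> \<phi> ` verts D2"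
    proof
      fix x assume x: "x \<in> verts D1"
      show "x \<in> \<phi> ` verts D2"
      proof (cases "x \<in> Ks D1")
        case True
        then obtain i where i: "i < k" "x = L1!i" using K1n by blast
        have "L2!i \<in> verts D2" using i s2 k_def Ks_sub[OF g2] by (metis nth_mem subsetD)
        thus ?thesis using phiK i by (metis image_eqI)
      qed (use pre x in blast)
    qed
  qed
  have hom: "(\<phi> a, \<phi> b) \<in> edges D1" if e: "(a,b) \<in> edges D2" for a b
  proof -
    have av: "a \<in> verts D2" and bv: "b \<in> verts D2" using e EV2 by auto
    show ?thesis
    proof (cases "a \<in> Ks D2")
      case aK: True
      then obtain i where i: "i<k" "a = L2!i" using K2n by blast
      show ?thesis
      proof (cases "b \<in> Ks D2")
        case True
        then obtain j where j: "j<k" "b = L2!j" using K2n by blast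
        show ?thesis using Eiff[OF i(1) j(1)] e i j phiK by simp
      next
        case False
        have "i \<in> fst (snd (tp D2 b))" using tp_in[of i D2 b] e i lk2 L2_def by simp
        hence "(Ls D1 ! i, \<phi> b) \<in> edges D1" using tp_in[of i D1 "\<phi> b"] phiR[OF bv False] i lk1 by simp
        thus ?thesis using phiK i L1_def by simp
      qed
    next
      case aK: False
      show ?thesis
      proof (cases "b \<in> Ks D2")
        case True
        then obtain j where j: "j<k" "b = L2!j" using K2n by blast
        have "j \<in> fst (tp D2 a)" using tp_out[of j D2 a] e j lk2 L2_def by simp
        hence "(\<phi> a, Ls D1 ! j) \<in> edges D1" using tp_out[of j D1 "\<phi> a"] phiR[OF av aK] j lk1 by simp
        thus ?thesis using phiK j L1_def by simp
      next
        case False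
        hence "a = b" using cover[OF g2 e] aK by blast
        thus ?thesis using e tp_loop[of a D2] tp_loop[of "\<phi> a" D1] phiR[OF av aK] by simp
      qed
    qed
  qed
  have strong: "\<exists>a b. (a,b) \<in> edges D2 \<and> \<phi> a = x \<and> \<phi> b = y" if e: "(x,y) \<in> edges D1" for x y
  proof -
    have xv: "x \<in> verts D1" and yv: "y \<in> verts D1" using e EV1 by auto
    show ?thesis
    proof (cases "x \<in> Ks D1")
      case xK: True
      then obtain i where i: "i<k" "x = L1!i" using K1n by blast
      show ?thesis
      proof (cases "y \<in> Ks D1")
        case True
        then obtain j where j: "j<k" "y = L1!j" using K1n by blast
        show ?thesis using Eiff[OF i(1) j(1)] e i j phiK by metis
      next
        case False
        obtain b where b: "b \<in> verts D2" "b \<notin> Ks D2" "\<phi> b = y" "tp D2 b = tp D1 y" using pre[OF yv False] by blast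
        have "i \<in> fst (snd (tp D1 y))" using tp_in[of i D1 y] e i lk1 L1_def by simp
        hence "(Ls D2 ! i, b) \<in> edges D2" using tp_in[of i D2 b] b i lk2 by simp
        thus ?thesis using phiK i b L2_def by metis
      qed
    next
      case xK: False
      obtain a where a: "a \<in> verts D2" "a \<notin> Ks D2" "\<phi> a = x" "tp D2 a = tp D1 x" using pre[OF xv xK] by blast
      show ?thesis
      proof (cases "y \<in> Ks D1")
        case True
        then obtain j where j: "j<k" "y = L1!j" using K1n by blast
        have "j \<in> fst (tp D1 x)" using tp_out[of j D1 x] e j lk1 L1_def by simp
        hence "(a, Ls D2 ! j) \<in> edges D2" using tp_out[of j D2 a] a j lk2 by simp
        thus ?thesis using phiK j a L2_def by metis
      next
        case False
        hence "x = y" using cover[OF g1 e] xK by blast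
        hence "(a, a) \<in> edges D2" using e tp_loop[of x D1] tp_loop[of a D2] a by simp
        thus ?thesis using a \<open>x = y\<close> by metis
      qed
    qed
  qed
  have "strong_epi \<phi> D2 D1"
    unfolding strong_epi_def strong_hom_def hom_def
    using img hom strong by auto
  thus ?thesis unfolding strong_hom_image_le_def by blast
qed


lemma epi_card:
  assumes fA: "finite_digraph A" and fB: "finite_digraph B" and e: "epi \<phi> B A"
  shows "card (verts A) \<le> card (verts B) \<and> (card (verts A) = card (verts B) \<longrightarrow>
     card (edges B) \<le> card (edges A) \<and> (card (edges B) = card (edges A) \<longrightarrow> (\<exists>\<psi>. strong_epi \<psi> A B)))"
proof -
  have fVA: "finite (verts A)" and fVB: "finite (verts B)" and EA: "edges A \<subseteq> verts A \<times> verts A"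
    and EB: "edges B \<subseteq> verts B \<times> verts B" using fA fB by (auto simp: finite_digraph_def)
  have img: "\<phi> ` verts B = verts A" and he: "\<And>a b. (a,b) \<in> edges B \<Longrightarrow> (\<phi> a, \<phi> b) \<in> edges A"
    using e by (auto simp: epi_def hom_def)
  have c1: "card (verts A) \<le> card (verts B)" using card_image_le[OF fVB, of \<phi>] img by simp
  moreover have "card (edges B) \<le> card (edges A) \<and> (card (edges B) = card (edges A) \<longrightarrow> (\<exists>\<psi>. strong_epi \<psi> A B))"
    if eq: "card (verts A) = card (verts B)"
  proof -
    have inj: "inj_on \<phi> (verts B)" using eq img by (intro eq_card_imp_inj_on[OF fVB]) simp
    define m where "m = (\<lambda>(a,b). (\<phi> a, \<phi> b))"
    have injm: "inj_on m (edges B)"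
    proof (rule inj_onI)
      fix p q assume p: "p \<in> edges B" and q: "q \<in> edges B" and pq: "m p = m q"
      obtain a b c d where ab: "p = (a,b)" and cd: "q = (c,d)" by fastforce
      have v: "a \<in> verts B" "b \<in> verts B" "c \<in> verts B" "d \<in> verts B" using p q ab cd EB by auto
      have "\<phi> a = \<phi> c" "\<phi> b = \<phi> d" using pq ab cd unfolding m_def by auto
      hence "a = c" "b = d" using inj v by (auto dest: inj_onD)
      thus "p = q" using ab cd by simp
    qed
    have mE: "m ` edges B \<subseteq> edges A" unfolding m_def using he by auto
    have fEA: "finite (edges A)" using finite_subset[OF EA] fVA by simp
    have cE: "card (edges B) = card (m ` edges B)" using injm by (simp add: card_image)
    have le: "card (edges B) \<le> card (edges A)" using card_mono[OF fEA mE] cE by simp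
    moreover have "\<exists>\<psi>. strong_epi \<psi> A B" if ceq: "card (edges B) = card (edges A)"
    proof -
      have mEq: "m ` edges B = edges A" using card_subset_eq[OF fEA mE] cE ceq by simp
      define \<psi> where "\<psi> = inv_into (verts B) \<phi>"
      have bij: "bij_betw \<phi> (verts B) (verts A)" using inj img by (simp add: bij_betw_def)
      have bij2: "bij_betw \<psi> (verts A) (verts B)" unfolding \<psi>_def by (rule bij_betw_inv_into[OF bij])
      have psi_phi: "\<psi> (\<phi> v) = v" if "v \<in> verts B" for v
        unfolding \<psi>_def using inj that by simp
      have h1: "(\<psi> x, \<psi> y) \<in> edges B" if "(x,y) \<in> edges A" for x y
      proof -
        from that mEq obtain p where p: "p \<in> edges B" "m p = (x,y)" by (metis imageE)
        obtain a b where "p = (a,b)" by fastforce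
        hence ab: "(a,b) \<in> edges B" "x = \<phi> a" "y = \<phi> b" using p unfolding m_def by auto
        thus ?thesis using psi_phi EB by auto
      qed
      have h2: "\<exists>a b. (a,b) \<in> edges A \<and> \<psi> a = x \<and> \<psi> b = y" if xy: "(x,y) \<in> edges B" for x y
      proof -
        have "x \<in> verts B" "y \<in> verts B" using xy EB by auto
        hence "(\<phi> x, \<phi> y) \<in> edges A \<and> \<psi> (\<phi> x) = x \<and> \<psi> (\<phi> y) = y" using he[OF xy] psi_phi by simp
        thus ?thesis by blast
      qed
      have im2: "\<psi> ` verts A = verts B" using bij2 by (simp add: bij_betw_def)
      have "hom \<psi> A B" unfolding hom_def using im2 h1 by blast
      moreover have "\<forall>x \<in> \<psi> ` verts A. \<forall>y \<in> \<psi> ` verts A. (x, y) \<in> edges B \<longrightarrow>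
        (\<exists>a b. (a, b) \<in> edges A \<and> \<psi> a = x \<and> \<psi> b = y)" using h2 by blast
      ultimately have "strong_epi \<psi> A B"
        unfolding strong_epi_def strong_hom_def using im2 by blast
      thus ?thesis by blast
    qed
    ultimately show ?thesis by blast
  qed
  ultimately show ?thesis by blast
qed

lemma strong_le_imp: "strong_hom_image_le A B \<Longrightarrow> hom_image_le A B"
  unfolding strong_hom_image_le_def hom_image_le_def strong_epi_def epi_def strong_hom_def by blast

lemma no_desc:
  assumes fin: "\<forall>D\<in>C. finite_digraph D"
    and l1: "\<And>A B. le A B \<Longrightarrow> hom_image_le A B"
    and l2: "\<And>A B. strong_hom_image_le A B \<Longrightarrow> le A B"
  shows "\<not> (\<exists>f :: nat \<Rightarrow> digraph. (\<forall>n. f n \<in> C) \<and> (\<forall>n. le (f (Suc n)) (f n) \<and> \<not> le (f n) (f (Suc n))))"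
proof
  assume "\<exists>f :: nat \<Rightarrow> digraph. (\<forall>n. f n \<in> C) \<and> (\<forall>n. le (f (Suc n)) (f n) \<and> \<not> le (f n) (f (Suc n)))"
  then obtain f :: "nat \<Rightarrow> digraph" where fC: "\<forall>n. f n \<in> C" and fd: "\<forall>n. le (f (Suc n)) (f n) \<and> \<not> le (f n) (f (Suc n))"
    by blast
  define \<mu> where "\<mu> D = (card (verts D), card (verts D) * card (verts D) - card (edges D))" for D :: digraph
  define r where "r = inv_image (less_than <*lex*> less_than) \<mu>"
  have wfr: "wf r" unfolding r_def by auto
  have "(f (Suc n), f n) \<in> r" for n
  proof -
    let ?A = "f (Suc n)" and ?B = "f n"
    have fA: "finite_digraph ?A" and fB: "finite_digraph ?B" using fin fC by auto
    obtain \<phi> where e: "epi \<phi> ?B ?A" using l1 fd by (meson hom_image_le_def)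
    note ec = epi_card[OF fA fB e]
    have nostrong: "\<not> (\<exists>\<psi>. strong_epi \<psi> ?A ?B)" using fd l2 unfolding strong_hom_image_le_def by blast
    show ?thesis
    proof (cases "card (verts ?A) = card (verts ?B)")
      case True
      have lt: "card (edges ?B) < card (edges ?A)" using ec True nostrong by auto
      have fVA: "finite (verts ?A)" and EA: "edges ?A \<subseteq> verts ?A \<times> verts ?A"
        using fA by (auto simp: finite_digraph_def)
      have "card (edges ?A) \<le> card (verts ?A \<times> verts ?A)"
        using EA fVA by (intro card_mono) auto
      hence "card (edges ?A) \<le> card (verts ?A) * card (verts ?A)" by (simp add: card_cartesian_product)
      thus ?thesis using lt True unfolding r_def \<mu>_def by auto
    next
      case False
      thus ?thesis using ec unfolding r_def \<mu>_def by auto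
    qed
  qed
  thus False using wfr wf_iff_no_infinite_down_chain by blast
qed

lemma nat_no_desc: "\<not> (\<forall>n. (g::nat\<Rightarrow>nat) (Suc n) < g n)"
proof
  assume a: "\<forall>n. g (Suc n) < g n"
  have "g n + n \<le> g 0" for n
  proof (induction n)
    case (Suc n)
    have "g (Suc n) < g n" using a by blast
    thus ?case using Suc by simp
  qed simp
  hence "g (Suc (g 0)) + Suc (g 0) \<le> g 0" by blast
  thus False by simp
qed


definition TU :: "nat \<Rightarrow> (nat set \<times> nat set \<times> bool) set" where
  "TU N = Pow {..<2*N} \<times> Pow {..<2*N} \<times> (UNIV :: bool set)"

lemma fin_TU: "finite (TU N)" unfolding TU_def by simp

lemma tp_TU: assumes "good N D" shows "tp D v \<in> TU N"
  using len_Ls[OF assms] unfolding tp_def TU_def by auto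

lemma cnt_TU: assumes "good N D" "cnt D t > 0" shows "t \<in> TU N"
proof -
  have "{v \<in> verts D - Ks D. tp D v = t} \<noteq> {}" using assms(2) unfolding cnt_def by (metis card.empty less_irrefl)
  then obtain v where "tp D v = t" by blast
  thus ?thesis using tp_TU[OF assms(1)] by blast
qed

lemma key_KU: assumes "good N D"
  shows "key D \<in> {..2*N} \<times> Pow ({..<2*N} \<times> {..<2*N}) \<times> Pow (TU N)"
  using len_Ls[OF assms] cnt_TU[OF assms] unfolding key_def by auto

lemma no_anti:
  fixes f :: "nat \<Rightarrow> digraph"
  assumes gC: "\<forall>D\<in>C. good N D" and fC: "\<forall>n. f n \<in> C"
  shows "\<exists>i j. i \<noteq> j \<and> strong_hom_image_le (f i) (f j)"
proof -
  define U where "U = ({..2*N} \<times> Pow ({..<2*N} \<times> {..<2*N}) \<times> Pow (TU N)) \<times> Pow (TU N)"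
  have fU: "finite U" unfolding U_def using fin_TU by simp
  define col where "col i j = (key (f i), {t \<in> TU N. cnt (f j) t < cnt (f i) t})" for i j
  have colU: "col i j \<in> U" for i j
    unfolding col_def U_def using key_KU gC fC by auto
  obtain h where h: "bij_betw h U {0..<card U}" using ex_bij_betw_finite_nat[OF fU] by blast
  define F where "F X = h (col (Min X) (Max X))" for X
  have part: "\<forall>x\<in>(UNIV::nat set). \<forall>y\<in>UNIV. x \<noteq> y \<longrightarrow> F {x, y} < card U"
    unfolding F_def using h colU by (auto simp: bij_betw_def)
  obtain Y t0 where Y: "infinite Y" "\<forall>x\<in>Y. \<forall>y\<in>Y. x \<noteq> y \<longrightarrow> F {x, y} = t0"
    using Ramsey2[OF infinite_UNIV_nat part] by blast
  define s where "s = enumerate Y"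
  have sY: "s n \<in> Y" for n unfolding s_def using Y(1) by (rule enumerate_in_set)
  have smono: "m < n \<Longrightarrow> s m < s n" for m n unfolding s_def using Y(1) by (simp add: enumerate_mono)
  have Fc: "F {s m, s n} = h (col (s m) (s n))" if "m < n" for m n
  proof -
    have "Min {s m, s n} = s m" "Max {s m, s n} = s n" using smono[OF that] by auto
    thus ?thesis unfolding F_def by simp
  qed
  have colc: "col (s m) (s n) = col (s 0) (s 1)" if "m < n" for m n
  proof -
    have "F {s m, s n} = t0" "F {s 0, s 1} = t0" using Y(2) sY smono[OF that] smono[of 0 1] by auto
    hence "h (col (s m) (s n)) = h (col (s 0) (s 1))" using Fc[OF that] Fc[of 0 1] by simp
    thus ?thesis using h colU unfolding bij_betw_def by (meson inj_onD)
  qed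
  have Sempty: "snd (col (s 0) (s 1)) = {}"
  proof (rule ccontr)
    assume "snd (col (s 0) (s 1)) \<noteq> {}"
    then obtain t where t: "t \<in> snd (col (s 0) (s 1))" by blast
    have "cnt (f (s (Suc n))) t < cnt (f (s n)) t" for n
    proof -
      have "t \<in> snd (col (s n) (s (Suc n)))" using t colc[of n "Suc n"] by simp
      thus ?thesis unfolding col_def by simp
    qed
    thus False using nat_no_desc[of "\<lambda>n. cnt (f (s n)) t"] by blast
  qed
  have keq: "key (f (s 0)) = key (f (s 1))"
  proof -
    have "key (f (s 0)) = fst (col (s 0) (s 1))" unfolding col_def by simp
    also have "\<dots> = fst (col (s 1) (s 2))" using colc[of 1 2] by simp
    also have "\<dots> = key (f (s 1))" unfolding col_def by simp
    finally show ?thesis .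
  qed
  have g0: "good N (f (s 0))" and g1: "good N (f (s 1))" using gC fC by auto
  have cle: "\<forall>t. cnt (f (s 0)) t \<le> cnt (f (s 1)) t"
  proof
    fix t
    show "cnt (f (s 0)) t \<le> cnt (f (s 1)) t"
    proof (cases "t \<in> TU N")
      case True
      have "t \<notin> snd (col (s 0) (s 1))" using Sempty by simp
      thus ?thesis using True unfolding col_def by (simp add: not_less)
    next
      case False
      hence "\<not> cnt (f (s 0)) t > 0" using cnt_TU[OF g0] by blast
      thus ?thesis by simp
    qed
  qed
  have "strong_hom_image_le (f (s 0)) (f (s 1))" by (rule embed[OF g0 g1 keq cle])
  moreover have "s 0 \<noteq> s 1" using smono[of 0 1] by simp
  ultimately show ?thesis by blast
qed

theorem corollary2p7:
  fixes C :: "digraph set" and N :: nat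
  assumes "\<forall>D \<in> C. finite_digraph D"
    and "\<forall>D \<in> C. \<forall>es. disjoint_edge_set D es \<longrightarrow> length es \<le> N"
  shows "wqo_on C hom_image_le \<and> wqo_on C strong_hom_image_le"
proof -
  have gC: "\<forall>D\<in>C. good N D" using assms by (simp add: good_def)
  have anti: "\<not> (\<exists>f :: nat \<Rightarrow> digraph. (\<forall>n. f n \<in> C) \<and> (\<forall>i j. i \<noteq> j \<longrightarrow> \<not> le (f i) (f j)))"
    if l2: "\<And>A B. strong_hom_image_le A B \<Longrightarrow> le A B" for le
  proof
    assume "\<exists>f :: nat \<Rightarrow> digraph. (\<forall>n. f n \<in> C) \<and> (\<forall>i j. i \<noteq> j \<longrightarrow> \<not> le (f i) (f j))"
    then obtain f :: "nat \<Rightarrow> digraph" where f: "\<forall>n. f n \<in> C" "\<forall>i j. i \<noteq> j \<longrightarrow> \<not> le (f i) (f j)" by blast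
    from no_anti[OF gC f(1)] obtain i j where "i \<noteq> j" "strong_hom_image_le (f i) (f j)" by blast
    thus False using f(2) l2 by blast
  qed
  have "wqo_on C hom_image_le"
    unfolding wqo_on_def
    using no_desc[OF assms(1), of hom_image_le] anti[of hom_image_le] strong_le_imp by blast
  moreover have "wqo_on C strong_hom_image_le"
    unfolding wqo_on_def
    using no_desc[OF assms(1), of strong_hom_image_le] anti[of strong_hom_image_le] strong_le_imp by blast
  ultimately show ?thesis ..
qed

end
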